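(* Let $\lambda_{\max}>1$ and let $F:[0,\lambda_{\max}]\to\mathbb{R}_+$ be continuously differentiable with $F(0)=0$, such that $F(x)<F^\star$ for all $x\in[0,1)$, $F'(1)>0$, and $F$ is concave-like. Then $F(x)\le F'(1)(x-1)+F(1)$ for all $x\in[0,\lambda_{\max}]$.
   Context: $F^\star=\sup\{\mathbb{E}_\alpha[F(X)]:\alpha$ a probability measure on $[0,\lambda_{\max}]$, $X\sim\alpha$, $\mathbb{E}_\alpha[X]\le1\}$. $F$ is concave-like if for all $x_1,x_2\in[0,\lambda_{\max}]\setminus\{1\}$, $p\in(0,1)$ with $px_1+(1-p)x_2=1$, we have $F(1)>pF(x_1)+(1-p)F(x_2)$. *)

theory Defs
  imports "HOL-Probability.Probability"
begin

definition Fstar :: "(real \<Rightarrow> real) \<Rightarrow> real \<Rightarrow> real" where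
  "Fstar F lmax =
     (SUP M \<in> {M :: real measure. prob_space M
                  \<and> sets M = sets (restrict_space borel {0..lmax})
                  \<and> (\<integral>x. x \<partial>M) \<le> 1}.
        (\<integral>x. F x \<partial>M))"

definition concave_like :: "(real \<Rightarrow> real) \<Rightarrow> real \<Rightarrow> bool" where
  "concave_like F lmax \<longleftrightarrow>
     (\<forall>x1 \<in> {0..lmax} - {1}. \<forall>x2 \<in> {0..lmax} - {1}. \<forall>p::real.
        0 < p \<and> p < 1 \<and> p * x1 + (1 - p) * x2 = 1 \<longrightarrow>
        F 1 > p * F x1 + (1 - p) * F x2)"

end

theory Submission
  imports Defs
begin

theorem lemmaC1:
  fixes F F' :: "real \<Rightarrow> real" and lmax :: real
  assumes "lmax > 1"
    and "\<forall>x \<in> {0..lmax}. F x \<ge> 0"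
    and "\<forall>x \<in> {0..lmax}. (F has_real_derivative F' x) (at x within {0..lmax})"
    and "continuous_on {0..lmax} F'"
    and "F 0 = 0"
    and "\<forall>x \<in> {0..<1}. F x < Fstar F lmax"
    and "F' 1 > 0"
    and "concave_like F lmax"
  shows "\<forall>x \<in> {0..lmax}. F x \<le> F' 1 * (x - 1) + F 1"
proof
  define G where "G x = F x - (F' 1 * (x - 1) + F 1)" for x
  define q where "q x = G x / (x - 1)" for x
  have d: "(F has_real_derivative F' 1) (at 1 within {0..lmax})"
    using assms(1,3) by auto
  hence "((\<lambda>y. (F y - F 1) / (y - 1)) \<longlongrightarrow> F' 1) (at 1 within {0..lmax})"
    by (simp add: has_field_derivative_iff)
  hence "((\<lambda>y. (F y - F 1) / (y - 1) - F' 1) \<longlongrightarrow> F' 1 - F' 1) (at 1 within {0..lmax})"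
    by (intro tendsto_intros)
  moreover have "eventually (\<lambda>y. (F y - F 1) / (y - 1) - F' 1 = q y) (at 1 within {0..lmax})"
    unfolding eventually_at_filter
    by (auto simp: q_def G_def field_simps)
  ultimately have ql: "(q \<longlongrightarrow> 0) (at 1 within {0..lmax})"
    using tendsto_cong by fastforce
  have qL: "(q \<longlongrightarrow> 0) (at_left 1)"
  proof -
    have "(q \<longlongrightarrow> 0) (at 1 within {0..1})"
      by (rule tendsto_within_subset[OF ql]) (use assms(1) in auto)
    thus ?thesis by (simp add: at_within_Icc_at_left)
  qed
  have qR: "(q \<longlongrightarrow> 0) (at_right 1)"
  proof -
    have "(q \<longlongrightarrow> 0) (at 1 within {1..lmax})"
      by (rule tendsto_within_subset[OF ql]) (use assms(1) in auto)
    thus ?thesis using assms(1) by (simp add: at_within_Icc_at_right)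
  qed
  have key: "(x2 - 1) * G x1 + (1 - x1) * G x2 < 0"
    if h: "0 \<le> x1" "x1 < 1" "1 < x2" "x2 \<le> lmax" for x1 x2
  proof -
    define p where "p = (x2 - 1) / (x2 - x1)"
    have dpos: "x2 - x1 > 0" using h by simp
    have p0: "0 < p" "p < 1" using h dpos by (auto simp: p_def divide_less_eq)
    have q1: "1 - p = (1 - x1) / (x2 - x1)" using dpos by (simp add: p_def field_simps)
    have m1: "(x2 - x1) * p = x2 - 1" using dpos by (simp add: p_def)
    have m2: "(x2 - x1) * (1 - p) = 1 - x1" using dpos q1 by simp
    note q1
    hence "p * x1 + (1 - p) * x2 = ((x2 - 1) * x1 + (1 - x1) * x2) / (x2 - x1)"
      by (simp add: p_def add_divide_distrib)
    also have "\<dots> = 1" using dpos by (simp add: field_simps)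
    finally have pe: "p * x1 + (1 - p) * x2 = 1" .
    have "F 1 > p * F x1 + (1 - p) * F x2"
      using assms(8) h p0 pe unfolding concave_like_def by auto
    hence "p * G x1 + (1 - p) * G x2 < 0"
    proof -
      have "p * G x1 + (1 - p) * G x2 = p * F x1 + (1 - p) * F x2
          - (F' 1 * (p * x1 + (1 - p) * x2 - 1) + F 1)"
        unfolding G_def by (simp add: algebra_simps)
      also have "\<dots> = p * F x1 + (1 - p) * F x2 - F 1" using pe by simp
      finally show ?thesis using \<open>F 1 > p * F x1 + (1 - p) * F x2\<close> by simp
    qed
    hence "(x2 - x1) * (p * G x1 + (1 - p) * G x2) < 0"
      using h by (simp add: mult_pos_neg)
    moreover have "(x2 - x1) * (p * G x1 + (1 - p) * G x2) = (x2 - 1) * G x1 + (1 - x1) * G x2"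
    proof -
      have "(x2 - x1) * (p * G x1 + (1 - p) * G x2) = ((x2 - x1) * p) * G x1 + ((x2 - x1) * (1 - p)) * G x2"
        by (simp add: algebra_simps)
      thus ?thesis using m1 m2 by simp
    qed
    ultimately show ?thesis by simp
  qed
  fix x assume x: "x \<in> {0..lmax}"
  have "G x \<le> 0"
  proof (cases "x < 1")
    case True
    have ev: "eventually (\<lambda>y. G x \<le> - ((1 - x) * q y)) (at_right 1)"
      unfolding eventually_at_right_field
    proof (intro exI[of _ lmax] conjI allI impI)
      show "1 < lmax" using assms(1) .
      fix y :: real assume "1 < y" "y < lmax"
      hence y: "1 < y" "y \<le> lmax" by auto
      have "(y - 1) * G x + (1 - x) * G y < 0" using key[of x y] x True y by auto
      moreover have "(y - 1) * q y = G y" using y by (simp add: q_def)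
      ultimately have "(y - 1) * (G x + (1 - x) * q y) < 0"
        by (metis (no_types, lifting) distrib_left mult.left_commute)
      hence "G x + (1 - x) * q y < 0" using y by (simp add: mult_less_0_iff)
      thus "G x \<le> - ((1 - x) * q y)" by simp
    qed
    have "((\<lambda>y. - ((1 - x) * q y)) \<longlongrightarrow> - ((1 - x) * 0)) (at_right 1)"
      by (intro tendsto_intros qR)
    hence "G x \<le> - ((1 - x) * 0)"
      using ev by (intro tendsto_lowerbound) auto
    thus ?thesis by simp
  next
    case False
    show ?thesis
    proof (cases "x = 1")
      case True thus ?thesis by (simp add: G_def)
    next
      case False2: False
      hence x1: "1 < x" "x \<le> lmax" using False x by auto
      have ev: "eventually (\<lambda>y. G x \<le> (x - 1) * q y) (at_left 1)"
        unfolding eventually_at_left_field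
      proof (intro exI[of _ 0] conjI allI impI)
        show "0 < (1::real)" by simp
        fix y :: real assume "0 < y" "y < 1"
        hence y: "0 \<le> y" "y < 1" by auto
        have "(x - 1) * G y + (1 - y) * G x < 0" using key[of y x] x1 y by auto
        moreover have "(1 - y) * q y = - G y" using y by (simp add: q_def field_simps)
        ultimately have "(1 - y) * (G x - (x - 1) * q y) < 0"
        proof -
          have "(1 - y) * (G x - (x - 1) * q y) = (1 - y) * G x - (x - 1) * ((1 - y) * q y)"
            by (simp add: algebra_simps)
          also have "\<dots> = (x - 1) * G y + (1 - y) * G x"
            using \<open>(1 - y) * q y = - G y\<close> by simp
          finally show ?thesis using \<open>(x - 1) * G y + (1 - y) * G x < 0\<close> by simp
        qed
        hence "G x - (x - 1) * q y < 0" using y by (simp add: mult_less_0_iff)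
        thus "G x \<le> (x - 1) * q y" by simp
      qed
      have "((\<lambda>y. (x - 1) * q y) \<longlongrightarrow> (x - 1) * 0) (at_left 1)"
        by (intro tendsto_intros qL)
      hence "G x \<le> (x - 1) * 0"
        using ev by (intro tendsto_lowerbound) auto
      thus ?thesis by simp
    qed
  qed
  thus "F x \<le> F' 1 * (x - 1) + F 1" by (simp add: G_def)
qed

end
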